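(* Let $\varepsilon\in(0,1)$ and $\alpha=\frac{\varepsilon}{1+\varepsilon}$. Consider the predator–prey system with simultaneous harvesting of both species $$\dot X=(2-Y-U)X,\qquad \dot Y=(X-U)Y,$$ on $\{X>0,Y>0\}$, under the feedback $U=1+\varepsilon(Y-1)$ (so that the closed loop is $\dot X=-(1+\varepsilon)(Y-1)X$, $\dot Y=[X-1-\varepsilon(Y-1)]Y$). Define $$\Pi(X)=\frac{1}{X^{\alpha}}\Big[X-1-\frac{1+\varepsilon}{\varepsilon}\big(X^{\alpha}-1\big)\Big]$$ and $$V(X,Y)=\Psi(X)+(1+\varepsilon)\Psi(Y)+\Pi(X)+\Psi\!\Big(\frac{Y}{X^{\alpha}}\Big).$$ Then $\Pi(1)=0$ and $\Pi(X)>0$ for $X\in(0,1)\cup(1,\infty)$; $V$ is positive definite with respect to $(1,1)$ and radially unbounded on $\{X>0,Y>0\}$; and along the closed-loop solutions $$\dot V=-\frac{(X-1)\big(X^{\alpha}-1\big)}{X^{\alpha}}-(1+\varepsilon)\varepsilon(Y-1)^2,$$ which is negative definite on the quadrant. Hence $V$ is a strict CLF for the closed loop on $\{X>0,Y>0\}$.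
   Context: $\Psi(S)=S-1-\ln S$ for $S>0$. Radially unbounded on the quadrant means $V\to\infty$ as $(X,Y)$ approaches $\{X=0\}\cup\{Y=0\}$ or as $X+Y\to\infty$. *)

theory Defs
  imports "HOL-Analysis.Analysis"
begin

definition Psi :: "real \<Rightarrow> real" where
  "Psi S = S - 1 - ln S"

definition alpha :: "real \<Rightarrow> real" where
  "alpha eps = eps / (1 + eps)"

definition Pi_fun :: "real \<Rightarrow> real \<Rightarrow> real" where
  "Pi_fun eps X = (1 / X powr alpha eps) *
     (X - 1 - ((1 + eps) / eps) * (X powr alpha eps - 1))"

definition V :: "real \<Rightarrow> real \<Rightarrow> real \<Rightarrow> real" where
  "V eps X Y = Psi X + (1 + eps) * Psi Y + Pi_fun eps X + Psi (Y / X powr alpha eps)"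

definition gX :: "real \<Rightarrow> real \<Rightarrow> real \<Rightarrow> real" where
  "gX X Y U = (2 - Y - U) * X"

definition gY :: "real \<Rightarrow> real \<Rightarrow> real \<Rightarrow> real" where
  "gY X Y U = (X - U) * Y"

definition Ufb :: "real \<Rightarrow> real \<Rightarrow> real" where
  "Ufb eps Y = 1 + eps * (Y - 1)"

definition fX :: "real \<Rightarrow> real \<Rightarrow> real \<Rightarrow> real" where
  "fX eps X Y = gX X Y (Ufb eps Y)"

definition fY :: "real \<Rightarrow> real \<Rightarrow> real \<Rightarrow> real" where
  "fY eps X Y = gY X Y (Ufb eps Y)"

definition Vdot :: "real \<Rightarrow> real \<Rightarrow> real \<Rightarrow> real" where
  "Vdot eps X Y = - (X - 1) * (X powr alpha eps - 1) / X powr alpha eps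
                  - (1 + eps) * eps * (Y - 1)^2"

end

theory Submission
  imports Defs "HOL-Real_Asymp.Real_Asymp"
begin


lemma Psi_pos: assumes "0 < S" "S \<noteq> 1" shows "Psi S > 0"
proof -
  have s: "sqrt S > 0" "sqrt S \<noteq> 1" using assms by auto
  have "ln S = 2 * ln (sqrt S)" using assms by (simp add: ln_sqrt)
  also have "\<dots> \<le> 2 * (sqrt S - 1)" using ln_le_minus_one[OF s(1)] by simp
  also have "\<dots> < S - 1"
  proof -
    have "(sqrt S - 1)^2 > 0" using s by simp
    then show ?thesis using assms by (simp add: power2_eq_square algebra_simps)
  qed
  finally show ?thesis by (simp add: Psi_def)
qed

lemma Psi_nonneg: assumes "0 < S" shows "Psi S \<ge> 0"
  using ln_le_minus_one[OF assms] by (simp add: Psi_def)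

lemma powr_concave_strict:
  fixes a X :: real
  assumes a: "0 < a" "a < 1" and X: "0 < X" "X \<noteq> 1"
  shows "X powr a - 1 < a * (X - 1)"
proof -
  define g where "g x = x powr a - a * x" for x :: real
  have D: "DERIV g x :> a * x powr (a - 1) - a" if "x > 0" for x
    unfolding g_def using that by (auto intro!: derivative_eq_intros)
  show ?thesis
  proof (cases "X < 1")
    case True
    have "\<exists>z. X < z \<and> z < 1 \<and> g 1 - g X = (1 - X) * (a * z powr (a - 1) - a)"
      by (rule MVT2) (use True D X in auto)
    then obtain z where z: "X < z" "z < 1" "g 1 - g X = (1 - X) * (a * z powr (a - 1) - a)" by blast
    have "z powr (a - 1) > 1 powr (a - 1)" using z X a by (intro powr_less_mono2_neg) auto
    then have "a * z powr (a - 1) - a > 0" using a by simp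
    then have "g 1 - g X > 0" using z True by simp
    then show ?thesis by (simp add: g_def algebra_simps)
  next
    case False
    then have X1: "X > 1" using X by simp
    have "\<exists>z. 1 < z \<and> z < X \<and> g X - g 1 = (X - 1) * (a * z powr (a - 1) - a)"
      by (rule MVT2) (use X1 D in auto)
    then obtain z where z: "1 < z" "z < X" "g X - g 1 = (X - 1) * (a * z powr (a - 1) - a)" by blast
    have "z powr (a - 1) < 1 powr (a - 1)" using z a by (intro powr_less_mono2_neg) auto
    then have "a * z powr (a - 1) - a < 0" using a by simp
    then have "g X - g 1 < 0" using z X1 by (simp add: mult_pos_neg)
    then show ?thesis by (simp add: g_def algebra_simps)
  qed
qed

definition FF :: "real \<Rightarrow> real \<Rightarrow> real \<Rightarrow> real \<Rightarrow> real" where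
  "FF eps X Y P = Psi X + (1 + eps) * Psi Y + (1 / P) * (X - 1 - ((1 + eps) / eps) * (P - 1)) + Psi (Y / P)"

definition DD :: "real \<Rightarrow> real \<Rightarrow> real \<Rightarrow> real \<Rightarrow> real \<Rightarrow> real \<Rightarrow> real \<Rightarrow> real" where
  "DD eps X Y P dX dY dP = (1 - 1/X) * dX + (1+eps) * ((1 - 1/Y) * dY)
     + (- dP / P^2 * (X - 1 - ((1 + eps) / eps) * (P - 1)) + (1/P) * (dX - ((1 + eps) / eps) * dP))
     + (1 - P/Y) * ((dY * P - Y * dP) / P^2)"

lemma chainF:
  fixes x y p :: "real \<Rightarrow> real"
  assumes "(x has_real_derivative dX) (at t)" "(y has_real_derivative dY) (at t)"
    "(p has_real_derivative dP) (at t)" "0 < x t" "0 < y t" "0 < p t" "0 < eps"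
  shows "((\<lambda>s. FF eps (x s) (y s) (p s)) has_real_derivative DD eps (x t) (y t) (p t) dX dY dP) (at t)"
  unfolding FF_def Psi_def
  using assms
  apply (auto intro!: derivative_eq_intros)
  apply (simp add: DD_def field_simps power2_eq_square)
  done

lemma alg:
  fixes eps X Y P :: real
  assumes "0 < eps" "0 < X" "0 < Y" "0 < P"
  shows "DD eps X Y P (- (1 + eps) * (Y - 1) * X) ((X - 1 - eps * (Y - 1)) * Y)
           (- eps * P * (Y - 1))
         = - (X - 1) * (P - 1) / P - (1 + eps) * eps * (Y - 1)^2"
  using assms
  unfolding DD_def
  apply (simp add: field_simps power2_eq_square)
  done

lemma deriv_V:
  fixes eps :: real and x y :: "real \<Rightarrow> real"
  assumes e: "0 < eps" and pos: "0 < x t" "0 < y t"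
    and dx: "(x has_real_derivative fX eps (x t) (y t)) (at t)"
    and dy: "(y has_real_derivative fY eps (x t) (y t)) (at t)"
  shows "((\<lambda>s. V eps (x s) (y s)) has_real_derivative Vdot eps (x t) (y t)) (at t)"
proof -
  define P where "P = x t powr alpha eps"
  have P0: "0 < P" using pos by (simp add: P_def)
  have d1: "((\<lambda>s. x s powr alpha eps) has_real_derivative
      alpha eps * x t powr (alpha eps - of_nat 1) * fX eps (x t) (y t)) (at t)"
    by (rule DERIV_fun_powr[OF dx pos(1)])
  have "alpha eps * x t powr (alpha eps - of_nat 1) * fX eps (x t) (y t) = - eps * P * (y t - 1)"
  proof -
    have h: "x t powr (alpha eps - of_nat 1) = P / x t"
      using pos by (simp add: P_def powr_diff del: of_nat_1)
    have "alpha eps * (P / x t) * fX eps (x t) (y t) = - eps * P * (y t - 1)"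
    proof -
      have "1 + eps \<noteq> 0" "x t \<noteq> 0" using pos e by auto
      have fx: "fX eps (x t) (y t) = -(1+eps)*(y t-1)*x t"
        by (simp add: fX_def gX_def Ufb_def algebra_simps)
      have "0 < eps * x t" using pos e by simp
      then have "x t + eps * x t \<noteq> 0" using pos by linarith
      then show ?thesis unfolding fx alpha_def using \<open>1 + eps \<noteq> 0\<close> \<open>x t \<noteq> 0\<close>
        by (simp add: field_simps)
    qed
    then show ?thesis unfolding h .
  qed
  with d1 have d2: "((\<lambda>s. x s powr alpha eps) has_real_derivative - eps * P * (y t - 1)) (at t)"
    by simp
  have "((\<lambda>s. FF eps (x s) (y s) (x s powr alpha eps)) has_real_derivative
      DD eps (x t) (y t) P (fX eps (x t) (y t)) (fY eps (x t) (y t)) (- eps * P * (y t - 1))) (at t)"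
    using chainF[OF dx dy d2 pos P0[unfolded P_def] e] by (simp add: P_def)
  moreover have "DD eps (x t) (y t) P (fX eps (x t) (y t)) (fY eps (x t) (y t)) (- eps * P * (y t - 1))
     = Vdot eps (x t) (y t)"
    using alg[OF e pos P0] by (simp add: fX_def fY_def gX_def gY_def Ufb_def Vdot_def P_def algebra_simps)
  moreover have "(\<lambda>s. V eps (x s) (y s)) = (\<lambda>s. FF eps (x s) (y s) (x s powr alpha eps))"
    by (simp add: V_def FF_def Pi_fun_def)
  ultimately show ?thesis by simp
qed

lemma Psi_top: "filterlim Psi at_top at_top"
  unfolding Psi_def by real_asymp

lemma Psi_zero: "filterlim Psi at_top (at_right 0)"
  unfolding Psi_def by real_asymp

lemma alpha_bounds: "0 < eps \<Longrightarrow> 0 < alpha eps \<and> alpha eps < 1"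
  by (simp add: alpha_def)

lemma Pi_pos:
  assumes e: "0 < eps" and X: "0 < X" "X \<noteq> 1"
  shows "Pi_fun eps X > 0"
proof -
  define a where "a = alpha eps"
  have a: "0 < a" "a < 1" using alpha_bounds[OF e] by (auto simp: a_def)
  have c: "(1 + eps) / eps = 1 / a" using e by (simp add: a_def alpha_def)
  have h: "X powr a - 1 < a * (X - 1)" by (rule powr_concave_strict[OF a X])
  have "(1 / a) * (X powr a - 1) < X - 1"
    using h a by (simp add: field_simps)
  then have "0 < X - 1 - (1 + eps) / eps * (X powr a - 1)" unfolding c by simp
  moreover have "0 < 1 / X powr a" using X by simp
  ultimately show ?thesis unfolding Pi_fun_def a_def by simp
qed

lemma Pi_nonneg:
  assumes e: "0 < eps" and X: "0 < X"
  shows "Pi_fun eps X \<ge> 0"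
  using Pi_pos[OF e X] by (cases "X = 1") (auto simp: Pi_fun_def)

lemma V_ge:
  assumes e: "0 < eps" and X: "0 < X" and Y: "0 < Y"
  shows "V eps X Y \<ge> Psi X" "V eps X Y \<ge> Psi Y"
proof -
  have "0 \<le> Psi X" "0 \<le> Psi Y" "0 \<le> Pi_fun eps X" "0 \<le> Psi (Y / X powr alpha eps)"
    using Psi_nonneg Pi_nonneg e X Y by auto
  moreover have "Psi Y \<le> (1 + eps) * Psi Y" using \<open>0 \<le> Psi Y\<close> e by (simp add: algebra_simps)
  ultimately show "V eps X Y \<ge> Psi X" "V eps X Y \<ge> Psi Y" unfolding V_def by linarith+
qed

lemma V_pos:
  assumes e: "0 < eps" and X: "0 < X" and Y: "0 < Y" and ne: "(X, Y) \<noteq> (1, 1)"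
  shows "V eps X Y > 0"
proof (cases "X = 1")
  case True
  then have "Y \<noteq> 1" using ne by auto
  then show ?thesis using V_ge(2)[OF e X Y] Psi_pos[OF Y] by linarith
next
  case False
  then show ?thesis using V_ge(1)[OF e X Y] Psi_pos[OF X] by linarith
qed

lemma radial:
  assumes e: "0 < eps"
  shows "\<exists>\<delta>>0. \<forall>X Y. 0 < X \<and> 0 < Y \<and> (X < \<delta> \<or> Y < \<delta> \<or> X + Y > 1 / \<delta>)
            \<longrightarrow> V eps X Y > M"
proof -
  have "eventually (\<lambda>S. Psi S > M) at_top"
    using Psi_top by (simp add: filterlim_at_top_dense)
  then obtain N where N: "\<And>S. S \<ge> N \<Longrightarrow> Psi S > M" by (auto simp: eventually_at_top_linorder)
  have "eventually (\<lambda>S. Psi S > M) (at_right 0)"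
    using Psi_zero by (simp add: filterlim_at_top_dense)
  then obtain d where d: "d > 0" "\<And>S. 0 < S \<Longrightarrow> S < d \<Longrightarrow> Psi S > M"
    by (auto simp: eventually_at_right_field)
  define N' where "N' = max N 1"
  define \<delta> where "\<delta> = min d (1 / (2 * N'))"
  have N'pos: "N' > 0" by (simp add: N'_def)
  have dpos: "\<delta> > 0" using d N'pos by (simp add: \<delta>_def)
  have big: "1 / \<delta> \<ge> 2 * N'"
  proof -
    have "\<delta> \<le> 1 / (2 * N')" by (simp add: \<delta>_def)
    then show ?thesis using dpos N'pos by (simp add: field_simps)
  qed
  show ?thesis
  proof (intro exI[of _ \<delta>] conjI allI impI dpos)
    fix X Y assume H: "0 < X \<and> 0 < Y \<and> (X < \<delta> \<or> Y < \<delta> \<or> X + Y > 1 / \<delta>)"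
    then have X: "0 < X" and Y: "0 < Y" by auto
    have dd: "\<delta> \<le> d" by (simp add: \<delta>_def)
    consider "X < \<delta>" | "Y < \<delta>" | "X \<ge> N" | "Y \<ge> N"
      using H big N'_def by (smt (verit))
    then show "V eps X Y > M"
    proof cases
      case 1 then show ?thesis using d(2)[OF X] dd V_ge(1)[OF e X Y] by linarith
    next
      case 2 then show ?thesis using d(2)[OF Y] dd V_ge(2)[OF e X Y] by linarith
    next
      case 3 then show ?thesis using N V_ge(1)[OF e X Y] by (meson less_le_trans)
    next
      case 4 then show ?thesis using N V_ge(2)[OF e X Y] by (meson less_le_trans)
    qed
  qed
qed

lemma Vdot_neg:
  assumes e: "0 < eps" and X: "0 < X" and Y: "0 < Y" and ne: "(X, Y) \<noteq> (1, 1)"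
  shows "Vdot eps X Y < 0"
proof -
  define a where "a = alpha eps"
  have a: "0 < a" "a < 1" using alpha_bounds[OF e] by (auto simp: a_def)
  have P: "X powr a > 0" using X by simp
  have t1: "(X - 1) * (X powr a - 1) \<ge> 0"
    and t1s: "X \<noteq> 1 \<Longrightarrow> (X - 1) * (X powr a - 1) > 0"
  proof -
    have gt: "X > 1 \<Longrightarrow> X powr a > 1"
      using powr_less_mono2[OF a(1), of 1 X] by simp
    have lt: "X < 1 \<Longrightarrow> X powr a < 1"
      using powr_less_mono2[OF a(1), of X 1] X by simp
    show "X \<noteq> 1 \<Longrightarrow> (X - 1) * (X powr a - 1) > 0"
      using gt lt by (cases "X < 1") (auto intro: mult_pos_pos mult_neg_neg)
    show "(X - 1) * (X powr a - 1) \<ge> 0"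
      using gt lt by (cases "X < 1"; cases "X = 1") (auto intro: mult_nonneg_nonneg mult_nonpos_nonpos)
  qed
  have t2: "(1 + eps) * eps * (Y - 1)^2 \<ge> 0" using e by simp
  have t2s: "Y \<noteq> 1 \<Longrightarrow> (1 + eps) * eps * (Y - 1)^2 > 0" using e by simp
  have eq: "Vdot eps X Y = - ((X - 1) * (X powr a - 1) / X powr a) - (1 + eps) * eps * (Y - 1)^2"
    by (simp only: Vdot_def a_def mult_minus_left minus_divide_left)
  show ?thesis
  proof (cases "X = 1")
    case True
    then have "Y \<noteq> 1" using ne by auto
    then show ?thesis using eq t2s True by simp
  next
    case False
    then have "(X - 1) * (X powr a - 1) / X powr a > 0" using t1s P by simp
    then show ?thesis using eq t2 by linarith
  qed
qed


theorem theorem2: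
  fixes eps :: real
  assumes "0 < eps" and "eps < 1"
  shows
    \<comment> \<open>properties of Pi\<close>
    "Pi_fun eps 1 = 0
     \<and> (\<forall>X. 0 < X \<and> X \<noteq> 1 \<longrightarrow> Pi_fun eps X > 0)
     \<comment> \<open>V positive definite w.r.t. (1,1) on the open quadrant\<close>
     \<and> V eps 1 1 = 0
     \<and> (\<forall>X Y. 0 < X \<and> 0 < Y \<and> (X, Y) \<noteq> (1, 1) \<longrightarrow> V eps X Y > 0)
     \<comment> \<open>radial unboundedness: V tends to infinity towards the axes or as X + Y tends to infinity\<close>
     \<and> (\<forall>M. \<exists>\<delta>>0. \<forall>X Y. 0 < X \<and> 0 < Y \<and> (X < \<delta> \<or> Y < \<delta> \<or> X + Y > 1 / \<delta>)
            \<longrightarrow> V eps X Y > M)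
     \<comment> \<open>derivative of V along closed-loop solutions\<close>
     \<and> (\<forall>x y :: real \<Rightarrow> real. \<forall>t.
          0 < x t \<and> 0 < y t
          \<and> (x has_real_derivative fX eps (x t) (y t)) (at t)
          \<and> (y has_real_derivative fY eps (x t) (y t)) (at t)
          \<longrightarrow> ((\<lambda>s. V eps (x s) (y s)) has_real_derivative Vdot eps (x t) (y t)) (at t))
     \<comment> \<open>Vdot negative definite on the quadrant\<close>
     \<and> Vdot eps 1 1 = 0
     \<and> (\<forall>X Y. 0 < X \<and> 0 < Y \<and> (X, Y) \<noteq> (1, 1) \<longrightarrow> Vdot eps X Y < 0)"
  proof -
  have p1: "\<forall>X. 0 < X \<and> X \<noteq> 1 \<longrightarrow> Pi_fun eps X > 0" using Pi_pos[OF assms(1)] by blast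
  have p2: "\<forall>X Y. 0 < X \<and> 0 < Y \<and> (X, Y) \<noteq> (1, 1) \<longrightarrow> V eps X Y > 0"
    using V_pos[OF assms(1)] by blast
  have p3: "\<forall>X Y. 0 < X \<and> 0 < Y \<and> (X, Y) \<noteq> (1, 1) \<longrightarrow> Vdot eps X Y < 0"
    using Vdot_neg[OF assms(1)] by blast
  show ?thesis
    using p1 p2 p3 radial[OF assms(1)] deriv_V[OF assms(1)]
    by (simp add: Pi_fun_def V_def Psi_def Vdot_def)
qed

end
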